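(* Let $K$ be a field of characteristic $0$, let $S=K[x_1,\ldots,x_n]$ be graded by $\deg x_i=a_i>0$, and let $I\subset S$ be a homogeneous ideal. Suppose that $(I^{(k-1)})^2\subseteq I^k$ for some $k\ge2$. Then every homogeneous ideal $J$ with $I^k\subseteq J\subseteq I^{(k)}$ is strongly Golod, i.e. $\partial(J)^2\subseteq J$, where $\partial(J)$ is the ideal generated by all $\partial f/\partial x_i$ with $f\in J$, $1\le i\le n$. In particular, any homogeneous ideal $J$ with $I^2\subseteq J\subseteq I^{(2)}$ is strongly Golod.
   Context: The $m$-th symbolic power is $I^{(m)}=\bigcup_{t\ge1} I^m:L^t$, where $L$ is the intersection of all associated, non-minimal prime ideals of $I^m$. *)

theory Defs
  imports Main "HOL-Library.Poly_Mapping"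
begin

text \<open>Multivariate polynomial ring S = K[x_i | i :: 'n] with variables indexed by a
  finite type 'n (so n = CARD('n)): a polynomial is a finitely supported map to coefficients
  from monomials.\<close>

type_synonym ('n, 'a) mpoly = "('n \<Rightarrow>\<^sub>0 nat) \<Rightarrow>\<^sub>0 'a"

definition is_ideal :: "'r::comm_ring_1 set \<Rightarrow> bool" where
  "is_ideal I \<longleftrightarrow> 0 \<in> I \<and> (\<forall>x\<in>I. \<forall>y\<in>I. x + y \<in> I) \<and> (\<forall>r. \<forall>x\<in>I. r * x \<in> I)"

definition ideal_gen :: "'r::comm_ring_1 set \<Rightarrow> 'r set" where
  "ideal_gen G = \<Inter>{I. is_ideal I \<and> G \<subseteq> I}"

definition ideal_prod :: "'r::comm_ring_1 set \<Rightarrow> 'r set \<Rightarrow> 'r set" where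
  "ideal_prod I J = ideal_gen {x * y | x y. x \<in> I \<and> y \<in> J}"

fun ideal_pow :: "'r::comm_ring_1 set \<Rightarrow> nat \<Rightarrow> 'r set" where
  "ideal_pow I 0 = UNIV"
| "ideal_pow I (Suc k) = ideal_prod I (ideal_pow I k)"

definition ideal_colon :: "'r::comm_ring_1 set \<Rightarrow> 'r set \<Rightarrow> 'r set" where
  "ideal_colon I J = {f. \<forall>g\<in>J. f * g \<in> I}"

definition prime_ideal :: "'r::comm_ring_1 set \<Rightarrow> bool" where
  "prime_ideal P \<longleftrightarrow> is_ideal P \<and> P \<noteq> UNIV \<and> (\<forall>x y. x * y \<in> P \<longrightarrow> x \<in> P \<or> y \<in> P)"

definition associated_prime :: "'r::comm_ring_1 set \<Rightarrow> 'r set \<Rightarrow> bool" where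
  "associated_prime I P \<longleftrightarrow> prime_ideal P \<and> (\<exists>f. P = ideal_colon I {f})"

definition embedded_prime :: "'r::comm_ring_1 set \<Rightarrow> 'r set \<Rightarrow> bool" where
  "embedded_prime I P \<longleftrightarrow> associated_prime I P \<and> (\<exists>Q. associated_prime I Q \<and> Q \<subset> P)"

text \<open>m-th symbolic power: union over t \<ge> 1 of I^m : L^t, L = intersection of the
  associated, non-minimal primes of I^m (empty intersection = whole ring).\<close>
definition symbolic_power :: "'r::comm_ring_1 set \<Rightarrow> nat \<Rightarrow> 'r set" where
  "symbolic_power I m =
     (let L = \<Inter>{P. embedded_prime (ideal_pow I m) P}
      in \<Union>t\<in>{1..}. ideal_colon (ideal_pow I m) (ideal_pow L t))"

definition wdeg :: "('n::finite \<Rightarrow> nat) \<Rightarrow> ('n \<Rightarrow>\<^sub>0 nat) \<Rightarrow> nat" where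
  "wdeg a m = (\<Sum>i\<in>UNIV. a i * Poly_Mapping.lookup m i)"

definition homogeneous :: "('n::finite \<Rightarrow> nat) \<Rightarrow> ('n, 'a::zero) mpoly \<Rightarrow> bool" where
  "homogeneous a f \<longleftrightarrow> (\<forall>m\<in>Poly_Mapping.keys f. \<forall>m'\<in>Poly_Mapping.keys f. wdeg a m = wdeg a m')"

definition homogeneous_ideal :: "('n::finite \<Rightarrow> nat) \<Rightarrow> ('n, 'a::comm_ring_1) mpoly set \<Rightarrow> bool" where
  "homogeneous_ideal a I \<longleftrightarrow> is_ideal I \<and> I = ideal_gen {f\<in>I. homogeneous a f}"

definition pderiv_var :: "'n \<Rightarrow> ('n, 'a::comm_semiring_1) mpoly \<Rightarrow> ('n, 'a) mpoly" where
  "pderiv_var i f = Abs_poly_mapping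
     (\<lambda>m. of_nat (Poly_Mapping.lookup m i + 1) * Poly_Mapping.lookup f (m + Poly_Mapping.single i 1))"

definition deriv_ideal :: "('n, 'a::comm_ring_1) mpoly set \<Rightarrow> ('n, 'a) mpoly set" where
  "deriv_ideal J = ideal_gen {pderiv_var i f | i f. f \<in> J}"

definition strongly_golod :: "('n, 'a::comm_ring_1) mpoly set \<Rightarrow> bool" where
  "strongly_golod J \<longleftrightarrow> ideal_pow (deriv_ideal J) 2 \<subseteq> J"

end

theory Submission
  imports Defs Complex_Main
begin

context fixes I :: "'r::comm_ring_1 set" assumes ID: "is_ideal I"
begin
lemma id_zero: "0 \<in> I" using ID by (simp add: is_ideal_def)
lemma id_add: "x \<in> I \<Longrightarrow> y \<in> I \<Longrightarrow> x + y \<in> I" using ID by (simp add: is_ideal_def)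
lemma id_multL: "x \<in> I \<Longrightarrow> r * x \<in> I" using ID by (simp add: is_ideal_def)
lemma id_multR: "x \<in> I \<Longrightarrow> x * r \<in> I" by (metis id_multL mult.commute)
lemma id_uminus: "x \<in> I \<Longrightarrow> - x \<in> I" using id_multL[of x "-1"] by simp
lemma id_diff: "x \<in> I \<Longrightarrow> y \<in> I \<Longrightarrow> x - y \<in> I"
  using id_add[of x "-y"] id_uminus[of y] by simp
lemma id_one: "1 \<in> I \<Longrightarrow> I = UNIV" using id_multL[of 1] by auto
lemma id_pow: "x \<in> I \<Longrightarrow> n \<ge> 1 \<Longrightarrow> x ^ n \<in> I"
  by (cases n) (auto simp del: power_Suc simp: power_Suc2 intro: id_multL)
end

lemma is_ideal_UNIV: "is_ideal UNIV" by (simp add: is_ideal_def)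

lemma is_ideal_Inter: "\<forall>X\<in>F. is_ideal X \<Longrightarrow> is_ideal (\<Inter>F)"
  by (simp add: is_ideal_def)

lemma ideal_gen_ideal: "is_ideal (ideal_gen G)"
  unfolding ideal_gen_def by (intro is_ideal_Inter) simp

lemma ideal_gen_sup: "G \<subseteq> ideal_gen G"
  unfolding ideal_gen_def by (rule Inter_greatest) simp

lemma ideal_gen_least: "is_ideal I \<Longrightarrow> G \<subseteq> I \<Longrightarrow> ideal_gen G \<subseteq> I"
  unfolding ideal_gen_def by (rule Inter_lower) simp

lemma ideal_prod_ideal: "is_ideal (ideal_prod I J)"
  unfolding ideal_prod_def by (rule ideal_gen_ideal)

lemma ideal_prod_mem: "x \<in> I \<Longrightarrow> y \<in> J \<Longrightarrow> x * y \<in> ideal_prod I J"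
  unfolding ideal_prod_def by (rule subsetD[OF ideal_gen_sup]) blast

lemma ideal_prod_least: "is_ideal K \<Longrightarrow> (\<And>x y. x \<in> I \<Longrightarrow> y \<in> J \<Longrightarrow> x * y \<in> K) \<Longrightarrow> ideal_prod I J \<subseteq> K"
  unfolding ideal_prod_def by (rule ideal_gen_least) auto

lemma ideal_prod_mono: "I \<subseteq> I' \<Longrightarrow> J \<subseteq> J' \<Longrightarrow> ideal_prod I J \<subseteq> ideal_prod I' J'"
  by (rule ideal_prod_least[OF ideal_prod_ideal]) (auto intro: ideal_prod_mem)

lemma ideal_prod_subL: "is_ideal I \<Longrightarrow> ideal_prod I J \<subseteq> I"
  by (rule ideal_prod_least) (simp_all add: id_multR)

lemma ideal_prod_subR: "is_ideal J \<Longrightarrow> ideal_prod I J \<subseteq> J"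
  by (rule ideal_prod_least) (simp_all add: id_multL)

lemma ideal_prod_UNIV: "is_ideal I \<Longrightarrow> ideal_prod I UNIV = I"
  using ideal_prod_subL[of I UNIV] ideal_prod_mem[of _ I 1 UNIV] by auto

lemma ideal_pow_ideal: "is_ideal (ideal_pow I k)"
  by (cases k) (auto simp: is_ideal_UNIV ideal_prod_ideal)

lemma ideal_pow_mono: "I \<subseteq> J \<Longrightarrow> ideal_pow I k \<subseteq> ideal_pow J k"
  by (induction k) (auto intro: ideal_prod_mono[THEN subsetD])

lemma ideal_pow_Suc_sub: "is_ideal I \<Longrightarrow> ideal_pow I (Suc k) \<subseteq> ideal_pow I k"
proof (induction k)
  case 0 then show ?case by simp
next
  case (Suc k)
  then show ?case by (simp add: ideal_prod_mono)
qed

lemma ideal_pow_antimono: "is_ideal I \<Longrightarrow> j \<le> k \<Longrightarrow> ideal_pow I k \<subseteq> ideal_pow I j"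
proof (induction k)
  case 0 then show ?case by simp
next
  case (Suc k)
  show ?case
  proof (cases "j = Suc k")
    case False
    then have "j \<le> k" using Suc by simp
    then show ?thesis using Suc ideal_pow_Suc_sub[of I k] by blast
  qed simp
qed

lemma ideal_pow_one: "is_ideal I \<Longrightarrow> ideal_pow I 1 = I"
  by (simp add: ideal_prod_UNIV)

lemma ideal_pow_sub_base: "is_ideal I \<Longrightarrow> k \<ge> 1 \<Longrightarrow> ideal_pow I k \<subseteq> I"
  using ideal_pow_antimono[of I 1 k] ideal_pow_one[of I] by simp

lemma power_in_ideal_pow: "x \<in> L \<Longrightarrow> x ^ n \<in> ideal_pow L n"
  by (induction n) (auto intro: ideal_prod_mem)

lemma ideal_prod_assoc_sub:
  "ideal_prod L (ideal_prod X Y) \<subseteq> ideal_prod (ideal_prod L X) Y"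
proof (rule ideal_prod_least[OF ideal_prod_ideal])
  fix x z assume x: "x \<in> L" and z: "z \<in> ideal_prod X Y"
  let ?K = "{z. x * z \<in> ideal_prod (ideal_prod L X) Y}"
  have "is_ideal ?K"
    using ideal_prod_ideal[of "ideal_prod L X" Y]
    by (auto simp: is_ideal_def distrib_left mult.left_commute)
  moreover have "ideal_prod X Y \<subseteq> ?K"
    by (rule ideal_prod_least[OF \<open>is_ideal ?K\<close>])
       (auto simp: mult.assoc[symmetric] intro!: ideal_prod_mem x)
  ultimately show "x * z \<in> ideal_prod (ideal_prod L X) Y" using z by blast
qed

lemma ideal_pow_add_sub: "ideal_pow L (a + b) \<subseteq> ideal_prod (ideal_pow L a) (ideal_pow L b)"
proof (induction a)
  case 0
  show ?case using ideal_prod_mem[of 1 UNIV _ "ideal_pow L b"] by auto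
next
  case (Suc a)
  have "ideal_pow L (Suc a + b) = ideal_prod L (ideal_pow L (a + b))" by simp
  also have "\<dots> \<subseteq> ideal_prod L (ideal_prod (ideal_pow L a) (ideal_pow L b))"
    using Suc by (intro ideal_prod_mono) auto
  also have "\<dots> \<subseteq> ideal_prod (ideal_prod L (ideal_pow L a)) (ideal_pow L b)"
    by (rule ideal_prod_assoc_sub)
  finally show ?case by simp
qed

lemma ideal_colon_ideal: "is_ideal I \<Longrightarrow> is_ideal (ideal_colon I J)"
  unfolding ideal_colon_def is_ideal_def by (auto simp: distrib_right mult.assoc)

lemma ideal_colon_antimono: "J \<subseteq> J' \<Longrightarrow> ideal_colon I J' \<subseteq> ideal_colon I J"
  unfolding ideal_colon_def by auto

lemma ideal_colon_sup: "is_ideal I \<Longrightarrow> I \<subseteq> ideal_colon I J"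
  unfolding ideal_colon_def by (auto intro: id_multR)

lemma colon_single: "y \<in> ideal_colon I {x} \<longleftrightarrow> y * x \<in> I"
  unfolding ideal_colon_def by auto

lemma prime_idealD: "prime_ideal P \<Longrightarrow> x * y \<in> P \<Longrightarrow> x \<in> P \<or> y \<in> P"
  unfolding prime_ideal_def by blast

lemma prime_ideal_ideal: "prime_ideal P \<Longrightarrow> is_ideal P"
  unfolding prime_ideal_def by blast

lemma prime_ideal_one: "prime_ideal P \<Longrightarrow> 1 \<notin> P"
  unfolding prime_ideal_def using id_one by blast

lemma prime_power: "prime_ideal P \<Longrightarrow> x ^ n \<in> P \<Longrightarrow> x \<in> P"
  by (induction n) (auto dest: prime_idealD prime_ideal_one)

lemma prime_ideal_pow_sub: "prime_ideal P \<Longrightarrow> is_ideal I \<Longrightarrow> ideal_pow I n \<subseteq> P \<Longrightarrow> I \<subseteq> P"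
  using power_in_ideal_pow[of _ I n] prime_power[of P] by blast


definition noeth :: "'r::comm_ring_1 itself \<Rightarrow> bool" where
  "noeth _ \<longleftrightarrow> wfP (\<lambda>X Y::'r set. is_ideal X \<and> is_ideal Y \<and> Y \<subset> X)"

lemma noeth_max:
  assumes N: "noeth TYPE('r::comm_ring_1)" and ne: "X \<in> F" and ids: "\<forall>Y\<in>F. is_ideal Y"
  shows "\<exists>M\<in>F. \<forall>Y\<in>F. M \<subseteq> Y \<longrightarrow> Y = (M::'r set)"
proof -
  have wf: "wf {(X, Y::'r set). is_ideal X \<and> is_ideal Y \<and> Y \<subset> X}"
    using N unfolding noeth_def wfp_def by simp
  from wfE_min[OF wf, of X F] ne obtain M where M: "M \<in> F"
    and min: "\<And>Y. (Y, M) \<in> {(X, Y). is_ideal X \<and> is_ideal Y \<and> Y \<subset> X} \<Longrightarrow> Y \<notin> F"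
    by blast
  show ?thesis
  proof (intro bexI[OF _ M] ballI impI)
    fix Y assume "Y \<in> F" "M \<subseteq> Y"
    with min[of Y] ids M show "Y = M" by auto
  qed
qed

lemma noeth_induct:
  assumes N: "noeth TYPE('r::comm_ring_1)" and I: "is_ideal (I::'r set)"
    and step: "\<And>I. is_ideal I \<Longrightarrow> (\<And>J. is_ideal J \<Longrightarrow> I \<subset> J \<Longrightarrow> P J) \<Longrightarrow> P I"
  shows "P I"
proof -
  have wf: "wf {(X, Y::'r set). is_ideal X \<and> is_ideal Y \<and> Y \<subset> X}"
    using N unfolding noeth_def wfp_def by simp
  define R where "R = {(X, Y::'r set). is_ideal X \<and> is_ideal Y \<and> Y \<subset> X}"
  have wfR: "wf R" using wf unfolding R_def .
  have "is_ideal I \<longrightarrow> P I"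
  proof (rule wf_induct[OF wfR, of "\<lambda>X. is_ideal X \<longrightarrow> P X"])
    fix x assume IH: "\<forall>y. (y, x) \<in> R \<longrightarrow> is_ideal y \<longrightarrow> P y"
    show "is_ideal x \<longrightarrow> P x"
    proof
      assume xi: "is_ideal x"
      show "P x"
      proof (rule step[OF xi])
        fix J assume Ji: "is_ideal J" and xJ: "x \<subset> J"
        have "(J, x) \<in> R" unfolding R_def using xi Ji xJ by blast
        then show "P J" using IH Ji by blast
      qed
    qed
  qed
  with I show ?thesis by simp
qed

section \<open>Associated primes from maximal annihilators\<close>

lemma assoc_prime_below:
  assumes N: "noeth TYPE('r::comm_ring_1)" and A: "is_ideal (A::'r set)"
    and P: "prime_ideal P" and sub: "ideal_colon A {x} \<subseteq> P"
  shows "\<exists>u. prime_ideal (ideal_colon A {x * u}) \<and> ideal_colon A {x * u} \<subseteq> P"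
proof -
  define F where "F = {ideal_colon A {x * u} | u. ideal_colon A {x * u} \<subseteq> P}"
  have "ideal_colon A {x * 1} \<in> F" using sub unfolding F_def by (intro CollectI exI[of _ 1]) simp
  moreover have "\<forall>Y\<in>F. is_ideal Y" unfolding F_def using ideal_colon_ideal[OF A] by auto
  ultimately obtain M where "M \<in> F" and Mmax: "\<forall>Y\<in>F. M \<subseteq> Y \<longrightarrow> Y = M"
    using noeth_max[OF N] by blast
  then obtain u where Mu: "M = ideal_colon A {x * u}" and MP: "M \<subseteq> P" unfolding F_def by auto
  have Mid: "is_ideal M" using Mu ideal_colon_ideal[OF A] by simp
  have PnU: "P \<noteq> UNIV" using P unfolding prime_ideal_def by auto
  have "prime_ideal M" unfolding prime_ideal_def
  proof (intro conjI allI impI)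
    show "is_ideal M" by (rule Mid)
    show "M \<noteq> UNIV" using MP PnU by auto
  next
    fix a b assume ab: "a * b \<in> M"
    show "a \<in> M \<or> b \<in> M"
    proof (rule ccontr)
      assume "\<not> (a \<in> M \<or> b \<in> M)"
      then have a: "a \<notin> M" and b: "b \<notin> M" by auto
      have sup1: "M \<subseteq> ideal_colon A {x * (u * a)}"
        proof
          fix y assume "y \<in> M"
          then have "y * (x * u) \<in> A" using Mu by (simp add: colon_single)
          then have "y * (x * u) * a \<in> A" by (rule id_multR[OF A])
          then show "y \<in> ideal_colon A {x * (u * a)}" by (simp add: colon_single mult_ac)
        qed
      have bin: "b \<in> ideal_colon A {x * (u * a)}"
        using ab Mu by (simp add: colon_single mult_ac)
      show False
      proof (cases "ideal_colon A {x * (u * a)} \<subseteq> P")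
        case True
        then have "ideal_colon A {x * (u * a)} \<in> F" unfolding F_def by blast
        with Mmax sup1 have "ideal_colon A {x * (u * a)} = M" by blast
        with bin b show False by simp
      next
        case False
        then obtain r where r1: "r \<in> ideal_colon A {x * (u * a)}" and r2: "r \<notin> P" by blast
        have "ideal_colon A {x * (u * r)} \<subseteq> P"
        proof
          fix s assume "s \<in> ideal_colon A {x * (u * r)}"
          then have "s * r \<in> M" using Mu by (simp add: colon_single mult_ac)
          then have "s * r \<in> P" using MP by blast
          then have "s \<in> P \<or> r \<in> P" by (rule prime_idealD[OF P])
          then show "s \<in> P" using r2 by simp
        qed
        then have "ideal_colon A {x * (u * r)} \<in> F" unfolding F_def by blast
        moreover have "M \<subseteq> ideal_colon A {x * (u * r)}"
        proof
          fix y assume "y \<in> M"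
          then have "y * (x * u) \<in> A" using Mu by (simp add: colon_single)
          then have "y * (x * u) * r \<in> A" by (rule id_multR[OF A])
          then show "y \<in> ideal_colon A {x * (u * r)}" by (simp add: colon_single mult_ac)
        qed
        ultimately have eq: "ideal_colon A {x * (u * r)} = M" using Mmax by blast
        have "a \<in> ideal_colon A {x * (u * r)}"
          using r1 by (simp add: colon_single mult_ac)
        with eq a show False by simp
      qed
    qed
  qed
  then show ?thesis using Mu MP by blast
qed

lemma exists_prime_above:
  assumes N: "noeth TYPE('r::comm_ring_1)" and D: "is_ideal (D::'r set)" and DU: "D \<noteq> UNIV"
  shows "\<exists>P. prime_ideal P \<and> D \<subseteq> P"
proof -
  define F where "F = {E. is_ideal E \<and> D \<subseteq> E \<and> E \<noteq> (UNIV::'r set)}"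
  have "D \<in> F" using D DU unfolding F_def by auto
  moreover have "\<forall>Y\<in>F. is_ideal Y" unfolding F_def by simp
  ultimately obtain M where MF: "M \<in> F" and Mmax: "\<forall>Y\<in>F. M \<subseteq> Y \<longrightarrow> Y = M"
    using noeth_max[OF N] by blast
  have Mid: "is_ideal M" and DM: "D \<subseteq> M" and MU: "M \<noteq> UNIV" using MF unfolding F_def by simp_all
  have "prime_ideal M" unfolding prime_ideal_def
  proof (intro conjI allI impI Mid MU)
    fix a b assume ab: "a * b \<in> M"
    show "a \<in> M \<or> b \<in> M"
    proof (cases "a \<in> M")
      case True then show ?thesis by simp
    next
      case False note a = False
      define E where "E = {m + r * a | m r. m \<in> M}"
      have Eid: "is_ideal E" unfolding is_ideal_def E_def
      proof (intro conjI ballI allI)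
        show "0 \<in> {m + r * a |m r. m \<in> M}"
          by (intro CollectI exI[of _ 0] conjI) (simp_all add: id_zero[OF Mid])
      next
        fix x y assume "x \<in> {m + r * a |m r. m \<in> M}" "y \<in> {m + r * a |m r. m \<in> M}"
        then obtain m1 r1 m2 r2 where "x = m1 + r1 * a" "y = m2 + r2 * a" "m1 \<in> M" "m2 \<in> M" by auto
        then have "x + y = (m1 + m2) + (r1 + r2) * a" "m1 + m2 \<in> M"
          by (simp_all add: algebra_simps id_add[OF Mid])
        then show "x + y \<in> {m + r * a |m r. m \<in> M}" by blast
      next
        fix s x assume "x \<in> {m + r * a |m r. m \<in> M}"
        then obtain m1 r1 where "x = m1 + r1 * a" "m1 \<in> M" by auto
        then have "s * x = (s * m1) + (s * r1) * a" "s * m1 \<in> M"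
          by (simp_all add: algebra_simps id_multL[OF Mid] id_multR[OF Mid])
        then show "s * x \<in> {m + r * a |m r. m \<in> M}" by blast
      qed
      have ME: "M \<subseteq> E"
      proof
        fix m assume "m \<in> M" then show "m \<in> E" unfolding E_def
          by (intro CollectI exI[of _ m] exI[of _ 0] conjI) simp_all
      qed
      have aE: "a \<in> E" unfolding E_def
        by (intro CollectI exI[of _ 0] exI[of _ 1] conjI) (simp_all add: id_zero[OF Mid])
      have "E \<notin> F"
      proof
        assume "E \<in> F"
        then have "E = M" using Mmax ME by simp
        then show False using aE a by simp
      qed
      then have "E = UNIV" using Eid ME DM unfolding F_def by simp
      then have "1 \<in> E" by simp
      then obtain m r where "1 = m + r * a" "m \<in> M" unfolding E_def by blast
      then have "b = m * b + r * (a * b)" by (metis mult.left_neutral distrib_right mult.assoc mult.commute)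
      moreover have "m * b + r * (a * b) \<in> M"
        using id_add[OF Mid id_multR[OF Mid \<open>m \<in> M\<close>] id_multL[OF Mid ab]] by simp
      ultimately show ?thesis by simp
    qed
  qed
  then show ?thesis using DM by blast
qed


definition irred :: "'r::comm_ring_1 set \<Rightarrow> bool" where
  "irred Q \<longleftrightarrow> is_ideal Q \<and> Q \<noteq> UNIV \<and>
     (\<forall>X Y. is_ideal X \<and> is_ideal Y \<and> Q = X \<inter> Y \<longrightarrow> Q = X \<or> Q = Y)"

definition rad :: "'r::comm_ring_1 set \<Rightarrow> 'r set" where
  "rad Q = {z. \<exists>n. z ^ n \<in> Q}"

lemma irred_decomp:
  assumes N: "noeth TYPE('r::comm_ring_1)" and B: "is_ideal (B::'r set)"
  shows "\<exists>F. finite F \<and> (\<forall>Q\<in>F. irred Q) \<and> B = \<Inter>F"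
proof (rule noeth_induct[OF N B])
  fix B :: "'r set" assume "is_ideal B"
    and IH: "\<And>J. is_ideal J \<Longrightarrow> B \<subset> J \<Longrightarrow> \<exists>F. finite F \<and> (\<forall>Q\<in>F. irred Q) \<and> J = \<Inter>F"
  show "\<exists>F. finite F \<and> (\<forall>Q\<in>F. irred Q) \<and> B = \<Inter>F"
  proof (cases "B = UNIV")
    case True then show ?thesis by (intro exI[of _ "{}"]) simp
  next
    case BU: False
    show ?thesis
    proof (cases "irred B")
      case True then show ?thesis by (intro exI[of _ "{B}"]) simp
    next
      case False
      then obtain X Y where X: "is_ideal X" and Y: "is_ideal Y" and BXY: "B = X \<inter> Y"
        and BX: "B \<noteq> X" and BY: "B \<noteq> Y"
        using BU \<open>is_ideal B\<close> unfolding irred_def by blast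
      have "B \<subset> X" "B \<subset> Y" using BXY BX BY by auto
      then obtain FX FY where "finite FX" "\<forall>Q\<in>FX. irred Q" "X = \<Inter>FX"
        "finite FY" "\<forall>Q\<in>FY. irred Q" "Y = \<Inter>FY"
        using IH[OF X] IH[OF Y] by metis
      then show ?thesis using BXY by (intro exI[of _ "FX \<union> FY"]) auto
    qed
  qed
qed

lemma ideal_plus_single:
  assumes Q: "is_ideal Q"
  shows "is_ideal {q + r * c | q r. q \<in> Q}" and "Q \<subseteq> {q + r * c | q r. q \<in> Q}"
    and "c \<in> {q + r * c | q r. q \<in> Q}"
proof -
  show "is_ideal {q + r * c | q r. q \<in> Q}" unfolding is_ideal_def
  proof (intro conjI ballI allI)
    show "0 \<in> {q + r * c |q r. q \<in> Q}"
      by (intro CollectI exI[of _ 0] conjI) (simp_all add: id_zero[OF Q])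
  next
    fix x y assume "x \<in> {q + r * c |q r. q \<in> Q}" "y \<in> {q + r * c |q r. q \<in> Q}"
    then obtain m1 r1 m2 r2 where "x = m1 + r1 * c" "y = m2 + r2 * c" "m1 \<in> Q" "m2 \<in> Q" by auto
    then have "x + y = (m1 + m2) + (r1 + r2) * c" "m1 + m2 \<in> Q"
      by (simp_all add: algebra_simps id_add[OF Q])
    then show "x + y \<in> {q + r * c |q r. q \<in> Q}" by blast
  next
    fix s x assume "x \<in> {q + r * c |q r. q \<in> Q}"
    then obtain m1 r1 where "x = m1 + r1 * c" "m1 \<in> Q" by auto
    then have "s * x = (s * m1) + (s * r1) * c" "s * m1 \<in> Q"
      by (simp_all add: algebra_simps id_multL[OF Q] id_multR[OF Q])
    then show "s * x \<in> {q + r * c |q r. q \<in> Q}" by blast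
  qed
  show "Q \<subseteq> {q + r * c | q r. q \<in> Q}"
  proof
    fix m assume "m \<in> Q" then show "m \<in> {q + r * c | q r. q \<in> Q}"
      by (intro CollectI exI[of _ m] exI[of _ 0] conjI) simp_all
  qed
  show "c \<in> {q + r * c | q r. q \<in> Q}"
    by (intro CollectI exI[of _ 0] exI[of _ 1] conjI) (simp_all add: id_zero[OF Q])
qed

lemma irred_primary:
  assumes N: "noeth TYPE('r::comm_ring_1)" and Q: "irred (Q::'r set)"
    and ab: "a * b \<in> Q" and a: "a \<notin> Q"
  shows "\<exists>n. b ^ n \<in> Q"
proof -
  have Qi: "is_ideal Q" using Q unfolding irred_def by simp
  define F where "F = {ideal_colon Q {b ^ n} | n. True}"
  have "ideal_colon Q {b ^ 0} \<in> F" unfolding F_def by blast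
  moreover have "\<forall>Y\<in>F. is_ideal Y" unfolding F_def using ideal_colon_ideal[OF Qi] by auto
  ultimately obtain M where "M \<in> F" and Mmax: "\<forall>Y\<in>F. M \<subseteq> Y \<longrightarrow> Y = M"
    using noeth_max[OF N] by blast
  then obtain n where Mn: "M = ideal_colon Q {b ^ n}" unfolding F_def by blast
  have "M \<subseteq> ideal_colon Q {b ^ Suc n}"
  proof
    fix y assume "y \<in> M"
    then have "y * b ^ n \<in> Q" using Mn by (simp add: colon_single)
    then have "y * b ^ n * b \<in> Q" by (rule id_multR[OF Qi])
    then show "y \<in> ideal_colon Q {b ^ Suc n}" by (simp add: colon_single mult_ac)
  qed
  moreover have "ideal_colon Q {b ^ Suc n} \<in> F" unfolding F_def by blast
  ultimately have eq: "ideal_colon Q {b ^ Suc n} = M" using Mmax by blast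
  define X where "X = {q + r * a | q r. q \<in> Q}"
  define Y where "Y = {q + r * b ^ n | q r. q \<in> Q}"
  note XP = ideal_plus_single[OF Qi, of a, folded X_def]
  note YP = ideal_plus_single[OF Qi, of "b ^ n", folded Y_def]
  have "X \<inter> Y \<subseteq> Q"
  proof
    fix y assume "y \<in> X \<inter> Y"
    then obtain q r q' s where y1: "y = q + r * a" and y2: "y = q' + s * b ^ n"
      and q: "q \<in> Q" and q': "q' \<in> Q"
      unfolding X_def Y_def by blast
    have "y * b \<in> Q" unfolding y1 using q ab
      by (simp add: distrib_right id_add[OF Qi] id_multR[OF Qi] id_multL[OF Qi] mult.assoc)
    moreover have "y * b = q' * b + s * b ^ Suc n" unfolding y2 by (simp add: algebra_simps)
    ultimately have "s * b ^ Suc n \<in> Q"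
      using id_diff[OF Qi, of "y * b" "q' * b"] id_multR[OF Qi q'] by simp
    then have "s \<in> ideal_colon Q {b ^ Suc n}" by (simp add: colon_single)
    then have "s \<in> ideal_colon Q {b ^ n}" using eq Mn by simp
    then have "s * b ^ n \<in> Q" by (simp add: colon_single)
    then show "y \<in> Q" unfolding y2 using q' by (simp add: id_add[OF Qi])
  qed
  then have "Q = X \<inter> Y" using XP YP by blast
  then have "Q = X \<or> Q = Y" using Q XP YP unfolding irred_def by blast
  then have "Q = Y" using XP a by blast
  then show ?thesis using YP by blast
qed

lemma rad_closed: "is_ideal Q \<Longrightarrow> z \<in> rad Q \<Longrightarrow> c * z \<in> rad Q"
  unfolding rad_def by (auto simp: power_mult_distrib intro: id_multL)

lemma prod_notin_prime:
  assumes P: "prime_ideal P" and S: "finite S" and g: "\<forall>s\<in>S. g s \<notin> P"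
  shows "prod g S \<notin> P"
  using S g
proof (induction S rule: finite_induct)
  case empty then show ?case using prime_ideal_one[OF P] by simp
next
  case (insert x S)
  then show ?case by (auto dest: prime_idealD[OF P])
qed

lemma prime_avoid:
  assumes P: "prime_ideal P" and S: "finite S"
    and cl: "\<forall>X\<in>S. \<forall>x\<in>X. \<forall>c. c * x \<in> X" and sub: "\<Inter>S \<subseteq> P"
  shows "\<exists>X\<in>S. X \<subseteq> P"
proof (rule ccontr)
  assume "\<not> (\<exists>X\<in>S. X \<subseteq> P)"
  then have "\<forall>X\<in>S. \<exists>x. x \<in> X \<and> x \<notin> P" by blast
  then obtain g where g: "\<forall>X\<in>S. g X \<in> X \<and> g X \<notin> P" by metis
  have "prod g S \<notin> P" using prod_notin_prime[OF P S] g by blast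
  moreover have "prod g S \<in> \<Inter>S"
  proof
    fix X assume X: "X \<in> S"
    have "prod g S = g X * prod g (S - {X})" using S X by (simp add: prod.remove)
    also have "\<dots> = prod g (S - {X}) * g X" by (simp add: mult.commute)
    also have "\<dots> \<in> X" using cl X g by blast
    finally show "prod g S \<in> X" .
  qed
  ultimately show False using sub by blast
qed

lemma common_power:
  assumes G: "finite G" and ids: "\<forall>Q\<in>G. is_ideal Q" and z: "\<forall>Q\<in>G. z \<in> rad Q"
  shows "\<exists>N. \<forall>Q\<in>G. z ^ N \<in> Q"
  using G ids z
proof (induction G rule: finite_induct)
  case empty then show ?case by simp
next
  case (insert Q G)
  then obtain N where N: "\<forall>Q\<in>G. z ^ N \<in> Q" by auto
  obtain n where n: "z ^ n \<in> Q" using insert.prems unfolding rad_def by auto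
  have "\<forall>Q'\<in>insert Q G. z ^ (N + n) \<in> Q'"
  proof
    fix Q' assume "Q' \<in> insert Q G"
    then show "z ^ (N + n) \<in> Q'"
    proof
      assume "Q' = Q" then show ?thesis
        using id_multL[OF _ n, of "z ^ N"] insert.prems by (simp add: power_add)
    next
      assume "Q' \<in> G" then show ?thesis
        using id_multR[OF _ , of Q' "z ^ N" "z ^ n"] N insert.prems by (simp add: power_add)
    qed
  qed
  then show ?case by blast
qed

lemma assoc_in_rad:
  assumes N: "noeth TYPE('r::comm_ring_1)" and F: "finite F" and irr: "\<forall>Q\<in>F. irred Q"
    and B: "(B::'r set) = \<Inter>F" and P: "associated_prime B P"
  shows "\<exists>Q\<in>F. P = rad Q"
proof -
  obtain f where Pf: "P = ideal_colon B {f}" and Pp: "prime_ideal P"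
    using P unfolding associated_prime_def by blast
  have ids: "\<forall>Q\<in>F. is_ideal Q" using irr unfolding irred_def by simp
  define F' where "F' = {Q\<in>F. f \<notin> Q}"
  have fin': "finite F'" using F unfolding F'_def by simp
  have sub1: "\<forall>Q\<in>F'. P \<subseteq> rad Q"
  proof (intro ballI subsetI)
    fix Q r assume Q: "Q \<in> F'" and r: "r \<in> P"
    then have "r * f \<in> B" using Pf by (simp add: colon_single)
    then have "f * r \<in> Q" using B Q unfolding F'_def by (auto simp: mult.commute)
    then show "r \<in> rad Q" using irred_primary[OF N, of Q f r] irr Q unfolding F'_def rad_def by auto
  qed
  have sub2: "\<Inter>(rad ` F') \<subseteq> P"
  proof
    fix z assume z: "z \<in> \<Inter>(rad ` F')"
    then obtain M where M: "\<forall>Q\<in>F'. z ^ M \<in> Q"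
      using common_power[OF fin', of z] ids unfolding F'_def by auto
    have "z ^ M * f \<in> B" unfolding B
    proof
      fix Q assume Q: "Q \<in> F"
      show "z ^ M * f \<in> Q"
      proof (cases "f \<in> Q")
        case True then show ?thesis using ids Q by (simp add: id_multL)
      next
        case False then have "z ^ M \<in> Q" using M Q unfolding F'_def by auto
        then show ?thesis using ids Q by (simp add: id_multR)
      qed
    qed
    then have "z ^ M \<in> P" using Pf by (simp add: colon_single)
    then show "z \<in> P" using prime_power[OF Pp] by blast
  qed
  have "\<exists>X\<in>rad ` F'. X \<subseteq> P"
  proof (rule prime_avoid[OF Pp])
    show "finite (rad ` F')" using fin' by simp
    show "\<forall>X\<in>rad ` F'. \<forall>x\<in>X. \<forall>c. c * x \<in> X"
      using rad_closed ids unfolding F'_def by blast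
    show "\<Inter>(rad ` F') \<subseteq> P" by (rule sub2)
  qed
  then obtain Q where "Q \<in> F'" "rad Q \<subseteq> P" by blast
  with sub1 have "P = rad Q" by blast
  then show ?thesis using \<open>Q \<in> F'\<close> unfolding F'_def by blast
qed

lemma finite_assoc:
  assumes N: "noeth TYPE('r::comm_ring_1)" and B: "is_ideal (B::'r set)"
  shows "finite {P. associated_prime B P}"
proof -
  obtain F where "finite F" "\<forall>Q\<in>F. irred Q" "B = \<Inter>F" using irred_decomp[OF N B] by blast
  then have "{P. associated_prime B P} \<subseteq> rad ` F" using assoc_in_rad[OF N] by blast
  then show ?thesis using \<open>finite F\<close> finite_subset by blast
qed


abbreviation embL :: "'r::comm_ring_1 set \<Rightarrow> 'r set" where
  "embL X \<equiv> \<Inter>{P. embedded_prime X P}"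

lemma embL_ideal: "is_ideal (embL X)"
  by (rule is_ideal_Inter) (auto simp: embedded_prime_def associated_prime_def prime_ideal_def)

lemma symbolic_power_mem:
  "f \<in> symbolic_power I m \<longleftrightarrow> (\<exists>t\<ge>1. f \<in> ideal_colon (ideal_pow I m) (ideal_pow (embL (ideal_pow I m)) t))"
  unfolding symbolic_power_def Let_def by auto

lemma symbolic_power_ideal:
  assumes I: "is_ideal (I::'r::comm_ring_1 set)"
  shows "is_ideal (symbolic_power I m)"
proof -
  let ?A = "ideal_pow I m" and ?L = "embL (ideal_pow I m)"
  have Ai: "is_ideal ?A" by (rule ideal_pow_ideal)
  have mono: "ideal_colon ?A (ideal_pow ?L t) \<subseteq> ideal_colon ?A (ideal_pow ?L t')" if "t \<le> t'" for t t'
    by (rule ideal_colon_antimono[OF ideal_pow_antimono[OF embL_ideal that]])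
  show ?thesis unfolding is_ideal_def
  proof (intro conjI ballI allI)
    show "0 \<in> symbolic_power I m" unfolding symbolic_power_mem
      using id_zero[OF ideal_colon_ideal[OF Ai]] by blast
  next
    fix x y assume "x \<in> symbolic_power I m" "y \<in> symbolic_power I m"
    then obtain t1 t2 where t1: "t1 \<ge> 1" "x \<in> ideal_colon ?A (ideal_pow ?L t1)"
      and t2: "t2 \<ge> 1" "y \<in> ideal_colon ?A (ideal_pow ?L t2)" unfolding symbolic_power_mem by blast
    have "x \<in> ideal_colon ?A (ideal_pow ?L (t1 + t2))" "y \<in> ideal_colon ?A (ideal_pow ?L (t1 + t2))"
      using mono[of t1 "t1 + t2"] mono[of t2 "t1 + t2"] t1 t2 by auto
    then have "x + y \<in> ideal_colon ?A (ideal_pow ?L (t1 + t2))"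
      by (rule id_add[OF ideal_colon_ideal[OF Ai]])
    then show "x + y \<in> symbolic_power I m" unfolding symbolic_power_mem using t1 by (intro exI[of _ "t1+t2"]) simp
  next
    fix r x assume "x \<in> symbolic_power I m"
    then obtain t1 where t1: "t1 \<ge> 1" "x \<in> ideal_colon ?A (ideal_pow ?L t1)"
      unfolding symbolic_power_mem by blast
    then have "r * x \<in> ideal_colon ?A (ideal_pow ?L t1)" by (intro id_multL[OF ideal_colon_ideal[OF Ai]])
    then show "r * x \<in> symbolic_power I m" unfolding symbolic_power_mem using t1 by blast
  qed
qed

lemma pow_sub_symbolic:
  assumes I: "is_ideal (I::'r::comm_ring_1 set)"
  shows "ideal_pow I m \<subseteq> symbolic_power I m"
proof
  fix x assume "x \<in> ideal_pow I m"
  then have "x \<in> ideal_colon (ideal_pow I m) (ideal_pow (embL (ideal_pow I m)) 1)"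
    using ideal_colon_sup[OF ideal_pow_ideal] by blast
  then show "x \<in> symbolic_power I m" unfolding symbolic_power_mem by blast
qed

context
  fixes I :: "'r::comm_ring_1 set" and k :: nat
  assumes N: "noeth TYPE('r)" and I: "is_ideal I" and k: "k \<ge> 2"
begin

lemma LA_sub:
  assumes Q: "prime_ideal Q" and CQ: "ideal_colon (ideal_pow I (k - 1)) {x} \<subseteq> Q"
    and LB: "ideal_pow (embL (ideal_pow I k)) Nn \<subseteq> ideal_colon (ideal_pow I (k - 1)) {x}"
  shows "embL (ideal_pow I (k - 1)) \<subseteq> Q"
proof -
  define A where "A = ideal_pow I (k - 1)"
  define B where "B = ideal_pow I k"
  have Ai: "is_ideal A" and Bi: "is_ideal B" unfolding A_def B_def by (simp_all add: ideal_pow_ideal)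
  obtain u where Q'p: "prime_ideal (ideal_colon A {x * u})" and Q'Q: "ideal_colon A {x * u} \<subseteq> Q"
    using assoc_prime_below[OF N Ai Q] CQ unfolding A_def by blast
  define Q' where "Q' = ideal_colon A {x * u}"
  have assQ': "associated_prime A Q'" unfolding associated_prime_def Q'_def using Q'p by blast
  show ?thesis
  proof (cases "embedded_prime A Q'")
    case True
    then have "embL A \<subseteq> Q'" by blast
    then show ?thesis using Q'Q unfolding Q'_def A_def by blast
  next
    case False
    then have nosub: "\<And>Q''. associated_prime A Q'' \<Longrightarrow> \<not> Q'' \<subset> Q'"
      using assQ' unfolding embedded_prime_def by blast
    have CQ': "ideal_colon A {x} \<subseteq> Q'"
    proof
      fix y assume "y \<in> ideal_colon A {x}"
      then have "y * x \<in> A" by (simp add: colon_single)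
      then have "y * x * u \<in> A" by (rule id_multR[OF Ai])
      then show "y \<in> Q'" unfolding Q'_def by (simp add: colon_single mult.assoc)
    qed
    have Q'pr: "prime_ideal Q'" using Q'p unfolding Q'_def .
    have "ideal_pow (embL B) Nn \<subseteq> Q'" using LB CQ' unfolding A_def B_def by blast
    then have LBQ': "embL B \<subseteq> Q'" by (rule prime_ideal_pow_sub[OF Q'pr embL_ideal])
    have finE: "finite {P. embedded_prime B P}"
      using finite_assoc[OF N Bi] by (rule finite_subset[rotated]) (auto simp: embedded_prime_def)
    have "\<exists>X\<in>{P. embedded_prime B P}. X \<subseteq> Q'"
    proof (rule prime_avoid[OF Q'pr finE])
      show "\<forall>X\<in>{P. embedded_prime B P}. \<forall>x\<in>X. \<forall>c. c * x \<in> X"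
        by (auto simp: embedded_prime_def associated_prime_def prime_ideal_def intro: id_multL)
      show "\<Inter>{P. embedded_prime B P} \<subseteq> Q'" by (rule LBQ')
    qed
    then obtain E where E: "embedded_prime B E" and EQ': "E \<subseteq> Q'" by blast
    then obtain E' where E'a: "associated_prime B E'" and E'E: "E' \<subset> E"
      unfolding embedded_prime_def by blast
    then obtain v where E'v: "E' = ideal_colon B {v}" and E'p: "prime_ideal E'"
      unfolding associated_prime_def by blast
    have "B \<subseteq> E'" using E'v ideal_colon_sup[OF Bi] by blast
    then have IE': "I \<subseteq> E'" using prime_ideal_pow_sub[OF E'p I] unfolding B_def by blast
    have "A \<subseteq> I" unfolding A_def using ideal_pow_sub_base[OF I] k by simp
    then have "ideal_colon A {1} \<subseteq> E'" using IE' by (auto simp: colon_single)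
    then obtain w where Q''p: "prime_ideal (ideal_colon A {1 * w})" and Q''E: "ideal_colon A {1 * w} \<subseteq> E'"
      using assoc_prime_below[OF N Ai E'p] by blast
    have "associated_prime A (ideal_colon A {1 * w})"
      unfolding associated_prime_def using Q''p by blast
    moreover have "ideal_colon A {1 * w} \<subset> Q'" using Q''E E'E EQ' by blast
    ultimately show ?thesis using nosub by blast
  qed
qed

lemma colon_transfer:
  assumes LB: "ideal_pow (embL (ideal_pow I k)) Nn \<subseteq> ideal_colon (ideal_pow I (k - 1)) {x}"
  shows "\<exists>M\<ge>1. x \<in> ideal_colon (ideal_pow I (k - 1)) (ideal_pow (embL (ideal_pow I (k - 1))) M)"
proof -
  define A where "A = ideal_pow I (k - 1)"
  define LA where "LA = embL (ideal_pow I (k - 1))"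
  define C where "C = ideal_colon A {x}"
  have Ai: "is_ideal A" unfolding A_def by (simp add: ideal_pow_ideal)
  have Ci: "is_ideal C" unfolding C_def by (rule ideal_colon_ideal[OF Ai])
  have LAi: "is_ideal LA" unfolding LA_def by (rule embL_ideal)
  define Fam where "Fam = {ideal_colon C (ideal_pow LA j) | j. j \<ge> 1}"
  have "ideal_colon C (ideal_pow LA 1) \<in> Fam" unfolding Fam_def by blast
  moreover have "\<forall>Y\<in>Fam. is_ideal Y" unfolding Fam_def using ideal_colon_ideal[OF Ci] by auto
  ultimately obtain D where "D \<in> Fam" and Dmax: "\<forall>Y\<in>Fam. D \<subseteq> Y \<longrightarrow> Y = D"
    using noeth_max[OF N] by blast
  then obtain j where j: "j \<ge> 1" and Dj: "D = ideal_colon C (ideal_pow LA j)" unfolding Fam_def by blast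
  have Di: "is_ideal D" unfolding Dj by (rule ideal_colon_ideal[OF Ci])
  have "D \<subseteq> ideal_colon C (ideal_pow LA (Suc j))"
    unfolding Dj by (rule ideal_colon_antimono[OF ideal_pow_Suc_sub[OF LAi]])
  moreover have "ideal_colon C (ideal_pow LA (Suc j)) \<in> Fam" unfolding Fam_def by force
  ultimately have eq: "ideal_colon C (ideal_pow LA (Suc j)) = D" using Dmax by blast
  have "D = UNIV"
  proof (rule ccontr)
    assume "D \<noteq> UNIV"
    then obtain P0 where P0: "prime_ideal P0" "D \<subseteq> P0" using exists_prime_above[OF N Di] by blast
    then have "ideal_colon D {1} \<subseteq> P0" by (auto simp: colon_single)
    then obtain u where Qp: "prime_ideal (ideal_colon D {1 * u})"
      using assoc_prime_below[OF N Di P0(1)] by blast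
    define Q where "Q = ideal_colon D {u}"
    have Qpr: "prime_ideal Q" using Qp unfolding Q_def by simp
    have "C \<subseteq> D" unfolding Dj by (rule ideal_colon_sup[OF Ci])
    moreover have "D \<subseteq> Q" unfolding Q_def using ideal_colon_sup[OF Di] by blast
    ultimately have "ideal_colon (ideal_pow I (k - 1)) {x} \<subseteq> Q" unfolding C_def A_def by blast
    then have LAQ: "LA \<subseteq> Q" unfolding LA_def using LA_sub[OF Qpr _ LB] by blast
    have "ideal_pow LA (Suc j) \<subseteq> {g. u * g \<in> C}"
    proof -
      have "is_ideal {g. u * g \<in> C}" using Ci unfolding is_ideal_def
        by (auto simp: distrib_left mult.left_commute)
      moreover have "\<And>a b. a \<in> LA \<Longrightarrow> b \<in> ideal_pow LA j \<Longrightarrow> u * (a * b) \<in> C"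
      proof -
        fix a b assume a: "a \<in> LA" and b: "b \<in> ideal_pow LA j"
        have "a * u \<in> D" using LAQ a unfolding Q_def by (auto simp: colon_single)
        then have "a * u * b \<in> C" using b unfolding Dj ideal_colon_def by blast
        then show "u * (a * b) \<in> C" by (simp add: mult_ac)
      qed
      ultimately show ?thesis by (simp add: ideal_prod_least)
    qed
    then have "u \<in> ideal_colon C (ideal_pow LA (Suc j))" unfolding ideal_colon_def by auto
    then have "u \<in> D" using eq by simp
    then have "1 \<in> Q" unfolding Q_def by (simp add: colon_single)
    then show False using prime_ideal_one[OF Qpr] by simp
  qed
  then have "1 \<in> D" by simp
  then have "\<forall>g\<in>ideal_pow LA j. g \<in> C" unfolding Dj ideal_colon_def by simp
  then have "x \<in> ideal_colon A (ideal_pow LA j)" unfolding C_def ideal_colon_def by (auto simp: mult.commute)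
  then show ?thesis using j unfolding A_def LA_def by blast
qed

end

definition is_deriv :: "('r::comm_ring_1 \<Rightarrow> 'r) \<Rightarrow> bool" where
  "is_deriv d \<longleftrightarrow> (\<forall>x y. d (x + y) = d x + d y) \<and> (\<forall>x y. d (x * y) = d x * y + x * d y)"

lemma deriv_zero: "is_deriv d \<Longrightarrow> d 0 = 0"
  unfolding is_deriv_def by (metis add_cancel_right_right add_0)

lemma deriv_minus: "is_deriv d \<Longrightarrow> d (x - y) = d x - d y"
  unfolding is_deriv_def by (metis add_diff_cancel diff_add_cancel)

lemma deriv_pow:
  assumes d: "is_deriv d" and I: "is_ideal I"
  shows "f \<in> ideal_pow I (Suc j) \<Longrightarrow> d f \<in> ideal_pow I j"
proof (induction j arbitrary: f)
  case 0 then show ?case by simp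
next
  case (Suc j)
  let ?K = "{f. f \<in> ideal_pow I (Suc (Suc j)) \<and> d f \<in> ideal_pow I (Suc j)}"
  have Pi: "is_ideal (ideal_pow I (Suc j))" "is_ideal (ideal_pow I (Suc (Suc j)))"
    by (simp_all only: ideal_pow_ideal)
  have sub: "ideal_pow I (Suc (Suc j)) \<subseteq> ideal_pow I (Suc j)" by (rule ideal_pow_Suc_sub[OF I])
  have "is_ideal ?K" unfolding is_ideal_def
  proof (intro conjI ballI allI)
    show "0 \<in> ?K" using deriv_zero[OF d] id_zero[OF Pi(1)] id_zero[OF Pi(2)] by simp
  next
    fix x y assume x: "x \<in> ?K" and y: "y \<in> ?K"
    have "x + y \<in> ideal_pow I (Suc (Suc j))" using x y by (intro id_add[OF Pi(2)]) simp_all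
    moreover have "d x + d y \<in> ideal_pow I (Suc j)" using x y by (intro id_add[OF Pi(1)]) simp_all
    moreover have "d (x + y) = d x + d y" using d unfolding is_deriv_def by simp
    ultimately show "x + y \<in> ?K" by simp
  next
    fix r x assume x: "x \<in> ?K"
    have "d (r * x) = d r * x + r * d x" using d unfolding is_deriv_def by simp
    have x1: "x \<in> ideal_pow I (Suc (Suc j))" and x2: "d x \<in> ideal_pow I (Suc j)" using x by simp_all
    have x3: "x \<in> ideal_pow I (Suc j)" using x1 sub by blast
    have "d r * x + r * d x \<in> ideal_pow I (Suc j)"
      by (rule id_add[OF Pi(1) id_multL[OF Pi(1) x3] id_multL[OF Pi(1) x2]])
    then have "d (r * x) \<in> ideal_pow I (Suc j)" using \<open>d (r * x) = _\<close> by simp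
    moreover have "r * x \<in> ideal_pow I (Suc (Suc j))" by (rule id_multL[OF Pi(2) x1])
    ultimately show "r * x \<in> ?K" by simp
  qed
  moreover have "\<And>a b. a \<in> I \<Longrightarrow> b \<in> ideal_pow I (Suc j) \<Longrightarrow> a * b \<in> ?K"
  proof -
    fix a b assume a: "a \<in> I" and b: "b \<in> ideal_pow I (Suc j)"
    have "d (a * b) = d a * b + a * d b" using d unfolding is_deriv_def by simp
    moreover have "d a * b \<in> ideal_pow I (Suc j)" using b by (rule id_multL[OF Pi(1)])
    moreover have "a * d b \<in> ideal_pow I (Suc j)" using Suc.IH[OF b] a by (simp add: ideal_prod_mem)
    ultimately have "d (a * b) \<in> ideal_pow I (Suc j)" by (metis id_add[OF Pi(1)])
    moreover have "a * b \<in> ideal_pow I (Suc (Suc j))" using a b by (simp add: ideal_prod_mem)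
    ultimately show "a * b \<in> ?K" by simp
  qed
  ultimately have "ideal_prod I (ideal_pow I (Suc j)) \<subseteq> ?K" by (rule ideal_prod_least)
  then show ?case using Suc.prems by auto
qed

theorem deriv_symbolic:
  assumes N: "noeth TYPE('r::comm_ring_1)" and I: "is_ideal (I::'r set)" and k: "k \<ge> 2"
    and d: "is_deriv d" and f: "f \<in> symbolic_power I k"
  shows "d f \<in> symbolic_power I (k - 1)"
proof -
  define A where "A = ideal_pow I (k - 1)"
  define B where "B = ideal_pow I k"
  define LB where "LB = embL B"
  have Ai: "is_ideal A" and Bi: "is_ideal B" unfolding A_def B_def by (simp_all add: ideal_pow_ideal)
  have BA: "B \<subseteq> A" unfolding A_def B_def by (rule ideal_pow_antimono[OF I]) simp
  have kk: "Suc (k - 1) = k" using k by simp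
  obtain t where t: "t \<ge> 1" "f \<in> ideal_colon B (ideal_pow LB t)"
    using f unfolding symbolic_power_mem B_def LB_def by blast
  have key: "d f * (g1 * g2) \<in> A" if g1: "g1 \<in> ideal_pow LB t" and g2: "g2 \<in> ideal_pow LB t" for g1 g2
  proof -
    have fg1: "f * g1 \<in> B" and fg2: "f * g2 \<in> B" using t g1 g2 unfolding ideal_colon_def by auto
    have "f * (g1 * g2) \<in> B" using id_multR[OF Bi fg1, of g2] by (simp add: mult.assoc)
    then have "f * (g1 * g2) \<in> ideal_pow I (Suc (k - 1))" unfolding B_def kk .
    then have dA: "d (f * (g1 * g2)) \<in> A" unfolding A_def by (rule deriv_pow[OF d I])
    have eq: "d (f * (g1 * g2)) = d f * (g1 * g2) + ((f * g2) * d g1 + (f * g1) * d g2)"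
      using d unfolding is_deriv_def by (simp add: algebra_simps)
    have "f * g2 \<in> A" "f * g1 \<in> A" using BA fg1 fg2 by auto
    then have "(f * g2) * d g1 + (f * g1) * d g2 \<in> A"
      by (meson id_add[OF Ai] id_multR[OF Ai])
    then have "d (f * (g1 * g2)) - ((f * g2) * d g1 + (f * g1) * d g2) \<in> A"
      using dA by (rule id_diff[OF Ai, rotated])
    then show ?thesis unfolding eq by simp
  qed
  have "ideal_pow LB (t + t) \<subseteq> ideal_colon A {d f}"
  proof -
    have "ideal_pow LB (t + t) \<subseteq> ideal_prod (ideal_pow LB t) (ideal_pow LB t)" by (rule ideal_pow_add_sub)
    also have "\<dots> \<subseteq> ideal_colon A {d f}"
      by (rule ideal_prod_least[OF ideal_colon_ideal[OF Ai]]) (use key in \<open>simp add: colon_single mult.commute\<close>)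
    finally show ?thesis .
  qed
  then obtain M where "M \<ge> 1" "d f \<in> ideal_colon (ideal_pow I (k - 1)) (ideal_pow (embL (ideal_pow I (k - 1))) M)"
    using colon_transfer[OF N I k] unfolding A_def LB_def B_def by blast
  then show ?thesis unfolding symbolic_power_mem by blast
qed


lemma lookup_pderiv_var:
  "Poly_Mapping.lookup (pderiv_var i f) m =
     of_nat (Poly_Mapping.lookup m i + 1) * Poly_Mapping.lookup f (m + Poly_Mapping.single i 1)"
proof -
  let ?e = "Poly_Mapping.single i (1::nat)"
  have "{m. of_nat (Poly_Mapping.lookup m i + 1) * Poly_Mapping.lookup f (m + ?e) \<noteq> 0}
        \<subseteq> (\<lambda>m. m + ?e) -` Poly_Mapping.keys f"
    by (auto simp: in_keys_iff)
  moreover have "finite ((\<lambda>m. m + ?e) -` Poly_Mapping.keys f)"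
    by (rule finite_vimageI) (auto simp: inj_on_def)
  ultimately have "finite {m. of_nat (Poly_Mapping.lookup m i + 1) * Poly_Mapping.lookup f (m + ?e) \<noteq> 0}"
    by (rule finite_subset)
  then show ?thesis unfolding pderiv_var_def by simp
qed

lemma pderiv_add: "pderiv_var i (f + g) = pderiv_var i f + pderiv_var i g"
  by (rule poly_mapping_eqI) (simp add: lookup_pderiv_var lookup_add distrib_left)

lemma pderiv_zero: "pderiv_var i 0 = 0"
  by (rule poly_mapping_eqI) (simp add: lookup_pderiv_var)

lemma pderiv_sum: "pderiv_var i (sum g S) = (\<Sum>x\<in>S. pderiv_var i (g x))"
  by (induction S rule: infinite_finite_induct) (simp_all add: pderiv_zero pderiv_add)

lemma pderiv_single:
  "pderiv_var i (Poly_Mapping.single m c) =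
    (if Poly_Mapping.lookup m i = 0 then 0
     else Poly_Mapping.single (m - Poly_Mapping.single i 1) (of_nat (Poly_Mapping.lookup m i) * c))"
proof (rule poly_mapping_eqI)
  fix p
  let ?e = "Poly_Mapping.single i (1::nat)"
  show "Poly_Mapping.lookup (pderiv_var i (Poly_Mapping.single m c)) p =
    Poly_Mapping.lookup (if Poly_Mapping.lookup m i = 0 then 0
     else Poly_Mapping.single (m - ?e) (of_nat (Poly_Mapping.lookup m i) * c)) p"
  proof (cases "Poly_Mapping.lookup m i = 0")
    case True
    have "m \<noteq> p + ?e"
    proof
      assume "m = p + ?e"
      then have "Poly_Mapping.lookup m i = Poly_Mapping.lookup p i + 1" by (simp add: lookup_add)
      with True show False by simp
    qed
    then show ?thesis using True by (simp add: lookup_pderiv_var lookup_single)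
  next
    case False
    have iff: "m = p + ?e \<longleftrightarrow> m - ?e = p"
    proof
      assume "m = p + ?e" then show "m - ?e = p" by simp
    next
      assume h: "m - ?e = p"
      show "m = p + ?e"
      proof (rule poly_mapping_eqI)
        fix x
        have "Poly_Mapping.lookup p x = Poly_Mapping.lookup m x - (1 when i = x)"
          using h by (auto simp: lookup_minus lookup_single)
        then show "Poly_Mapping.lookup m x = Poly_Mapping.lookup (p + ?e) x"
          using False by (cases "x = i") (auto simp: lookup_add lookup_single)
      qed
    qed
    show ?thesis
    proof (cases "m = p + ?e")
      case True
      then have "Poly_Mapping.lookup p i + 1 = Poly_Mapping.lookup m i"
        by (simp add: lookup_add)
      moreover have "m - ?e = p" using True iff by simp
      ultimately show ?thesis using False True
        by (simp add: lookup_pderiv_var lookup_single when_def)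
    next
      case F2: False
      then have "m - ?e \<noteq> p" using iff by simp
      then show ?thesis using False F2
        by (simp add: lookup_pderiv_var lookup_single when_def)
    qed
  qed
qed

lemma pderiv_single_mult:
  fixes c d :: "'a::comm_ring_1"
  shows "pderiv_var i (Poly_Mapping.single m c * Poly_Mapping.single m' d) =
    pderiv_var i (Poly_Mapping.single m c) * Poly_Mapping.single m' d +
    Poly_Mapping.single m c * pderiv_var i (Poly_Mapping.single m' d)"
proof -
  let ?e = "Poly_Mapping.single i (1::nat)"
  let ?a = "Poly_Mapping.lookup m i" and ?b = "Poly_Mapping.lookup m' i"
  have lmm: "Poly_Mapping.lookup (m + m') i = ?a + ?b" by (simp add: lookup_add)
  have s1: "?a \<noteq> 0 \<Longrightarrow> m' + (m - Poly_Mapping.single i (Suc 0)) = m + m' - Poly_Mapping.single i (Suc 0)"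
    by (auto simp: poly_mapping_eq_iff fun_eq_iff lookup_add lookup_minus lookup_single when_def)
  have s2: "?b \<noteq> 0 \<Longrightarrow> m + (m' - Poly_Mapping.single i (Suc 0)) = m + m' - Poly_Mapping.single i (Suc 0)"
    by (auto simp: poly_mapping_eq_iff fun_eq_iff lookup_add lookup_minus lookup_single when_def)
  show ?thesis
    unfolding mult_single pderiv_single lmm
    by (cases "?a = 0"; cases "?b = 0")
       (simp_all add: mult_single s1 s2 single_add[symmetric] algebra_simps)
qed

lemma poly_mapping_sum_single:
  "f = (\<Sum>m\<in>Poly_Mapping.keys f. Poly_Mapping.single m (Poly_Mapping.lookup f m))"
proof (rule poly_mapping_eqI)
  fix p
  have "(\<Sum>m\<in>Poly_Mapping.keys f. Poly_Mapping.lookup (Poly_Mapping.single m (Poly_Mapping.lookup f m)) p)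
      = (\<Sum>m\<in>Poly_Mapping.keys f. if p = m then Poly_Mapping.lookup f m else 0)"
    by (rule sum.cong) (auto simp: lookup_single when_def)
  also have "\<dots> = Poly_Mapping.lookup f p" by (simp add: in_keys_iff)
  finally show "Poly_Mapping.lookup f p = Poly_Mapping.lookup
      (\<Sum>m\<in>Poly_Mapping.keys f. Poly_Mapping.single m (Poly_Mapping.lookup f m)) p"
    by (simp add: lookup_sum)
qed

lemma pderiv_mult:
  fixes f g :: "('n \<Rightarrow>\<^sub>0 nat) \<Rightarrow>\<^sub>0 'a::comm_ring_1"
  shows "pderiv_var i (f * g) = pderiv_var i f * g + f * pderiv_var i g"
proof -
  define sf where "sf m = Poly_Mapping.single m (Poly_Mapping.lookup f m)" for m
  define sg where "sg m = Poly_Mapping.single m (Poly_Mapping.lookup g m)" for m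
  have f: "f = (\<Sum>m\<in>Poly_Mapping.keys f. sf m)" unfolding sf_def by (rule poly_mapping_sum_single)
  have g: "g = (\<Sum>m\<in>Poly_Mapping.keys g. sg m)" unfolding sg_def by (rule poly_mapping_sum_single)
  have "f * g = (\<Sum>a\<in>Poly_Mapping.keys f. \<Sum>b\<in>Poly_Mapping.keys g. sf a * sg b)"
    by (subst f, subst g) (simp add: sum_product)
  then have "pderiv_var i (f * g) =
      (\<Sum>a\<in>Poly_Mapping.keys f. \<Sum>b\<in>Poly_Mapping.keys g. pderiv_var i (sf a) * sg b + sf a * pderiv_var i (sg b))"
    by (simp add: pderiv_sum sf_def sg_def pderiv_single_mult)
  also have "\<dots> = (\<Sum>a\<in>Poly_Mapping.keys f. \<Sum>b\<in>Poly_Mapping.keys g. pderiv_var i (sf a) * sg b)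
      + (\<Sum>a\<in>Poly_Mapping.keys f. \<Sum>b\<in>Poly_Mapping.keys g. sf a * pderiv_var i (sg b))"
    by (simp add: sum.distrib)
  also have "\<dots> = pderiv_var i f * g + f * pderiv_var i g"
    by (subst (3 4) f, subst (3 4) g) (simp add: pderiv_sum sum_product)
  finally show ?thesis .
qed

lemma is_deriv_pderiv: "is_deriv (pderiv_var i :: (('n \<Rightarrow>\<^sub>0 nat) \<Rightarrow>\<^sub>0 'a::comm_ring_1) \<Rightarrow> _)"
  unfolding is_deriv_def by (simp add: pderiv_add pderiv_mult)


lemma nat_incsub:
  fixes u :: "nat \<Rightarrow> nat"
  shows "\<exists>r::nat\<Rightarrow>nat. strict_mono r \<and> (\<forall>i j. i \<le> j \<longrightarrow> u (r i) \<le> u (r j))"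
proof -
  obtain f where f: "strict_mono f" and m: "monoseq (\<lambda>n. u (f n))" using seq_monosub by blast
  show ?thesis
  proof (cases "\<forall>m n. m \<le> n \<longrightarrow> u (f m) \<le> u (f n)")
    case True
    then have "strict_mono f \<and> (\<forall>i j. i \<le> j \<longrightarrow> u (f i) \<le> u (f j))" using f by simp
    then show ?thesis by (rule exI[where x=f])
  next
    case False
    have "(\<forall>m. \<forall>n\<ge>m. u (f m) \<le> u (f n)) \<or> (\<forall>m. \<forall>n\<ge>m. u (f n) \<le> u (f m))"
      using m unfolding monoseq_def .
    then have dec': "\<forall>m. \<forall>n\<ge>m. u (f n) \<le> u (f m)" using False by blast
    have dec: "u (f n) \<le> u (f m)" if "m \<le> n" for m n using dec' that by blast
    obtain n0 where n0: "\<forall>y. u (f n0) \<le> u (f y)"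
      using ex_has_least_nat[of "\<lambda>_. True" 0 "\<lambda>n. u (f n)"] by auto
    have const: "u (f n) = u (f n0)" if "n \<ge> n0" for n
    proof -
      have "u (f n) \<le> u (f n0)" using dec[OF that] .
      moreover have "u (f n0) \<le> u (f n)" using n0 by simp
      ultimately show ?thesis by simp
    qed
    define r where "r n = f (n0 + n)" for n
    have "strict_mono r" using f unfolding r_def strict_mono_def by simp
    moreover have "\<forall>i j. i \<le> j \<longrightarrow> u (r i) \<le> u (r j)"
    proof (intro allI impI)
      fix i j :: nat
      have "u (r i) = u (f n0)" unfolding r_def by (rule const) simp
      moreover have "u (r j) = u (f n0)" unfolding r_def by (rule const) simp
      ultimately show "u (r i) \<le> u (r j)" by simp
    qed
    ultimately have "strict_mono r \<and> (\<forall>i j. i \<le> j \<longrightarrow> u (r i) \<le> u (r j))" by simp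
    then show ?thesis by (rule exI[where x=r])
  qed
qed

lemma dickson_S:
  fixes s :: "nat \<Rightarrow> ('n \<Rightarrow>\<^sub>0 nat)"
  assumes "finite S"
  shows "\<exists>r::nat\<Rightarrow>nat. strict_mono r \<and> (\<forall>i j. i \<le> j \<longrightarrow> (\<forall>x\<in>S. Poly_Mapping.lookup (s (r i)) x \<le> Poly_Mapping.lookup (s (r j)) x))"
  using assms
proof (induction S rule: finite_induct)
  case empty
  have "strict_mono (\<lambda>n::nat. n)" by (simp add: strict_mono_def)
  then show ?case by (intro exI[where x="\<lambda>n::nat. n"]) simp
next
  case (insert c S)
  then obtain r :: "nat \<Rightarrow> nat" where r: "strict_mono r"
    and rS: "\<forall>i j. i \<le> j \<longrightarrow> (\<forall>x\<in>S. Poly_Mapping.lookup (s (r i)) x \<le> Poly_Mapping.lookup (s (r j)) x)"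
    by auto
  obtain r2 :: "nat \<Rightarrow> nat" where r2: "strict_mono r2"
    and r2c: "\<forall>i j. i \<le> j \<longrightarrow> Poly_Mapping.lookup (s (r (r2 i))) c \<le> Poly_Mapping.lookup (s (r (r2 j))) c"
    using nat_incsub[of "\<lambda>n. Poly_Mapping.lookup (s (r n)) c"] by blast
  have "strict_mono (r \<circ> r2)" using r r2 by (simp add: strict_mono_def)
  moreover have P2: "\<forall>i j. i \<le> j \<longrightarrow> (\<forall>x\<in>insert c S. Poly_Mapping.lookup (s ((r \<circ> r2) i)) x \<le> Poly_Mapping.lookup (s ((r \<circ> r2) j)) x)"
  proof (intro allI impI ballI)
    fix i j :: nat and x assume ij: "i \<le> j" and x: "x \<in> insert c S"
    have "r2 i \<le> r2 j" using r2 ij by (simp add: strict_mono_less_eq)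
    show "Poly_Mapping.lookup (s ((r \<circ> r2) i)) x \<le> Poly_Mapping.lookup (s ((r \<circ> r2) j)) x"
    proof (cases "x = c")
      case True then show ?thesis using r2c ij by simp
    next
      case False
      then have "x \<in> S" using x by simp
      then show ?thesis using rS \<open>r2 i \<le> r2 j\<close> by simp
    qed
  qed
  ultimately show ?case by (intro exI[where x="r \<circ> r2"] conjI)
qed

lemma dickson:
  fixes s :: "nat \<Rightarrow> ('n::finite \<Rightarrow>\<^sub>0 nat)"
  shows "\<exists>i j. i < j \<and> (\<forall>x. Poly_Mapping.lookup (s i) x \<le> Poly_Mapping.lookup (s j) x)"
proof -
  obtain r :: "nat \<Rightarrow> nat" where r: "strict_mono r"
    and rS: "\<forall>i j. i \<le> j \<longrightarrow> (\<forall>x\<in>UNIV. Poly_Mapping.lookup (s (r i)) x \<le> Poly_Mapping.lookup (s (r j)) x)"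
    using dickson_S[of UNIV s] by auto
  have "r 0 < r 1" using r by (simp add: strict_mono_def)
  moreover have "\<forall>x. Poly_Mapping.lookup (s (r 0)) x \<le> Poly_Mapping.lookup (s (r 1)) x"
    using rS by simp
  ultimately show ?thesis by blast
qed

section \<open>Lexicographic monomial order\<close>

definition lexless :: "('n \<Rightarrow> nat) \<Rightarrow> ('n \<Rightarrow>\<^sub>0 nat) \<Rightarrow> ('n \<Rightarrow>\<^sub>0 nat) \<Rightarrow> bool" where
  "lexless enc m m' \<longleftrightarrow> (\<exists>x. Poly_Mapping.lookup m x < Poly_Mapping.lookup m' x \<and>
      (\<forall>y. enc y < enc x \<longrightarrow> Poly_Mapping.lookup m y = Poly_Mapping.lookup m' y))"

definition lexle :: "('n \<Rightarrow> nat) \<Rightarrow> ('n \<Rightarrow>\<^sub>0 nat) \<Rightarrow> ('n \<Rightarrow>\<^sub>0 nat) \<Rightarrow> bool" where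
  "lexle enc m m' \<longleftrightarrow> m = m' \<or> lexless enc m m'"

lemma lexless_irrefl: "\<not> lexless enc m m"
  unfolding lexless_def by auto

lemma lexless_trans:
  assumes enc: "inj enc" and ab: "lexless enc a b" and bc: "lexless enc b c"
  shows "lexless enc a c"
proof -
  obtain x1 where x1: "Poly_Mapping.lookup a x1 < Poly_Mapping.lookup b x1"
    "\<forall>y. enc y < enc x1 \<longrightarrow> Poly_Mapping.lookup a y = Poly_Mapping.lookup b y"
    using ab unfolding lexless_def by blast
  obtain x2 where x2: "Poly_Mapping.lookup b x2 < Poly_Mapping.lookup c x2"
    "\<forall>y. enc y < enc x2 \<longrightarrow> Poly_Mapping.lookup b y = Poly_Mapping.lookup c y"
    using bc unfolding lexless_def by blast
  consider "enc x1 < enc x2" | "enc x2 < enc x1" | "x1 = x2"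
    using enc by (metis injD linorder_neqE_nat)
  then show ?thesis
  proof cases
    case 1
    then show ?thesis unfolding lexless_def using x1 x2
      by (intro exI[of _ x1]) (metis order.strict_trans)
  next
    case 2
    then show ?thesis unfolding lexless_def using x1 x2
      by (intro exI[of _ x2]) (metis order.strict_trans)
  next
    case 3
    then show ?thesis unfolding lexless_def using x1 x2
      by (intro exI[of _ x1]) auto
  qed
qed

lemma lexless_total:
  assumes "m \<noteq> m'"
  shows "lexless enc m m' \<or> lexless enc m' m"
proof -
  obtain x0 where "Poly_Mapping.lookup m x0 \<noteq> Poly_Mapping.lookup m' x0"
    using assms by (metis poly_mapping_eqI)
  then obtain x where x: "Poly_Mapping.lookup m x \<noteq> Poly_Mapping.lookup m' x"
    and xmin: "\<forall>y. Poly_Mapping.lookup m y \<noteq> Poly_Mapping.lookup m' y \<longrightarrow> enc x \<le> enc y"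
    using ex_has_least_nat[of "\<lambda>y. Poly_Mapping.lookup m y \<noteq> Poly_Mapping.lookup m' y" x0 enc] by blast
  have eq: "\<forall>y. enc y < enc x \<longrightarrow> Poly_Mapping.lookup m y = Poly_Mapping.lookup m' y"
    using xmin by (meson not_le)
  show ?thesis
  proof (cases "Poly_Mapping.lookup m x < Poly_Mapping.lookup m' x")
    case True then show ?thesis unfolding lexless_def using eq by blast
  next
    case False
    then have "Poly_Mapping.lookup m' x < Poly_Mapping.lookup m x" using x by simp
    then show ?thesis unfolding lexless_def using eq by (metis)
  qed
qed

lemma lexless_add: "lexless enc a b \<Longrightarrow> lexless enc (d + a) (d + b)"
  unfolding lexless_def by (simp add: lookup_add)

lemma lexle_add: "lexle enc a b \<Longrightarrow> lexle enc (d + a) (d + b)"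
  unfolding lexle_def using lexless_add by blast

lemma lexle_pw:
  assumes "\<forall>x. Poly_Mapping.lookup a x \<le> Poly_Mapping.lookup b x"
  shows "lexle enc a b"
proof (cases "a = b")
  case False
  have "\<not> lexless enc b a" using assms unfolding lexless_def by (meson not_le)
  then show ?thesis using lexless_total[OF False] unfolding lexle_def by blast
qed (simp add: lexle_def)

lemma lexle_trans: "inj enc \<Longrightarrow> lexle enc a b \<Longrightarrow> lexle enc b c \<Longrightarrow> lexle enc a c"
  unfolding lexle_def using lexless_trans by blast

lemma lexle_lexless_trans: "inj enc \<Longrightarrow> lexle enc a b \<Longrightarrow> lexless enc b c \<Longrightarrow> lexless enc a c"
  unfolding lexle_def using lexless_trans by blast

lemma lexle_antisym: "inj enc \<Longrightarrow> lexle enc a b \<Longrightarrow> lexle enc b a \<Longrightarrow> a = b"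
  unfolding lexle_def using lexless_trans lexless_irrefl by blast

lemma lexless_not_le: "inj enc \<Longrightarrow> lexless enc a b \<longleftrightarrow> \<not> lexle enc b a"
  unfolding lexle_def using lexless_trans lexless_irrefl lexless_total by metis

lemma lexless_wf:
  fixes enc :: "'n::finite \<Rightarrow> nat"
  assumes enc: "inj enc"
  shows "wf {(a, b). lexless enc a b}"
proof -
  have "\<not> (\<exists>f. \<forall>i. (f (Suc i), f i) \<in> {(a, b). lexless enc a b})"
  proof
    assume "\<exists>f. \<forall>i. (f (Suc i), f i) \<in> {(a, b). lexless enc a b}"
    then obtain f where f: "\<And>i. lexless enc (f (Suc i)) (f i)" by auto
    have chain: "i < j \<Longrightarrow> lexless enc (f j) (f i)" for i j
    proof (induction j)
      case 0 then show ?case by simp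
    next
      case (Suc j)
      show ?case
      proof (cases "i = j")
        case True then show ?thesis using f by simp
      next
        case False
        then have "lexless enc (f j) (f i)" using Suc by simp
        then show ?thesis using f lexless_trans[OF enc] by blast
      qed
    qed
    obtain i j where ij: "i < j" and pw: "\<forall>x. Poly_Mapping.lookup (f i) x \<le> Poly_Mapping.lookup (f j) x"
      using dickson[of f] by blast
    have "lexle enc (f i) (f j)" by (rule lexle_pw[OF pw])
    moreover have "lexless enc (f j) (f i)" by (rule chain[OF ij])
    ultimately show False using lexless_not_le[OF enc] by blast
  qed
  then show ?thesis using wf_iff_no_infinite_down_chain by blast
qed


lemma smult_decomp:
  "Poly_Mapping.single d c * f =
     (\<Sum>p\<in>Poly_Mapping.keys f. Poly_Mapping.single (d + p) (c * Poly_Mapping.lookup f p))"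
  by (subst poly_mapping_sum_single[of f]) (simp add: sum_distrib_left mult_single)

lemma smult_lookup:
  fixes f :: "('n \<Rightarrow>\<^sub>0 nat) \<Rightarrow>\<^sub>0 'a::comm_ring_1"
  shows "Poly_Mapping.lookup (Poly_Mapping.single d c * f) (d + q) = c * Poly_Mapping.lookup f q"
proof -
  have "Poly_Mapping.lookup (Poly_Mapping.single d c * f) (d + q) =
      (\<Sum>p\<in>Poly_Mapping.keys f. if p = q then c * Poly_Mapping.lookup f p else 0)"
    unfolding smult_decomp lookup_sum by (rule sum.cong) (auto simp: lookup_single when_def)
  also have "\<dots> = c * Poly_Mapping.lookup f q" by (simp add: in_keys_iff)
  finally show ?thesis .
qed

lemma smult_keys:
  fixes f :: "('n \<Rightarrow>\<^sub>0 nat) \<Rightarrow>\<^sub>0 'a::comm_ring_1"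
  shows "Poly_Mapping.keys (Poly_Mapping.single d c * f) \<subseteq> (\<lambda>p. d + p) ` Poly_Mapping.keys f"
proof
  fix k assume "k \<in> Poly_Mapping.keys (Poly_Mapping.single d c * f)"
  then obtain a b where "k = a + b" "a \<in> Poly_Mapping.keys (Poly_Mapping.single d c)" "b \<in> Poly_Mapping.keys f"
    using keys_mult by blast
  moreover have "Poly_Mapping.keys (Poly_Mapping.single d c) \<subseteq> {d}" by simp
  ultimately show "k \<in> (\<lambda>p. d + p) ` Poly_Mapping.keys f" by blast
qed

definition is_lm :: "('n \<Rightarrow> nat) \<Rightarrow> (('n \<Rightarrow>\<^sub>0 nat) \<Rightarrow>\<^sub>0 'a::zero) \<Rightarrow> ('n \<Rightarrow>\<^sub>0 nat) \<Rightarrow> bool" where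
  "is_lm enc f m \<longleftrightarrow> m \<in> Poly_Mapping.keys f \<and> (\<forall>m'\<in>Poly_Mapping.keys f. lexle enc m' m)"

definition lm :: "('n \<Rightarrow> nat) \<Rightarrow> (('n \<Rightarrow>\<^sub>0 nat) \<Rightarrow>\<^sub>0 'a::zero) \<Rightarrow> ('n \<Rightarrow>\<^sub>0 nat)" where
  "lm enc f = (SOME m. is_lm enc f m)"

definition LT :: "('n \<Rightarrow> nat) \<Rightarrow> (('n \<Rightarrow>\<^sub>0 nat) \<Rightarrow>\<^sub>0 'a::zero) set \<Rightarrow> ('n \<Rightarrow>\<^sub>0 nat) set" where
  "LT enc X = {lm enc f | f. f \<in> X \<and> f \<noteq> 0}"

context
  fixes enc :: "'n::finite \<Rightarrow> nat"
  assumes enc: "inj enc"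
begin

lemma max_exists:
  assumes "finite K" "K \<noteq> {}"
  shows "\<exists>m\<in>K. \<forall>m'\<in>K. lexle enc m' m"
  using assms
proof (induction K rule: finite_ne_induct)
  case (singleton x) then show ?case by (simp add: lexle_def)
next
  case (insert x K)
  then obtain m where m: "m \<in> K" "\<forall>m'\<in>K. lexle enc m' m" by blast
  show ?case
  proof (cases "lexle enc x m")
    case True then show ?thesis using m by blast
  next
    case False
    then have "lexless enc m x" using lexless_not_le[OF enc] by blast
    then have "lexle enc m x" unfolding lexle_def by blast
    then have "\<forall>m'\<in>insert x K. lexle enc m' x"
      using m lexle_trans[OF enc] by (auto simp: lexle_def)
    then show ?thesis by blast
  qed
qed

lemma lm_is_lm: "f \<noteq> 0 \<Longrightarrow> is_lm enc f (lm enc f)"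
proof -
  assume "f \<noteq> 0"
  then have "Poly_Mapping.keys f \<noteq> {}" by simp
  then obtain m where "is_lm enc f m" using max_exists[of "Poly_Mapping.keys f"] unfolding is_lm_def by auto
  then show ?thesis unfolding lm_def by (rule someI)
qed

lemma lm_eqI: "is_lm enc f m \<Longrightarrow> lm enc f = m"
proof -
  assume m: "is_lm enc f m"
  then have "f \<noteq> 0" unfolding is_lm_def by auto
  then have "is_lm enc f (lm enc f)" by (rule lm_is_lm)
  then show ?thesis using m lexle_antisym[OF enc] unfolding is_lm_def by blast
qed

lemma LT_up:
  fixes X :: "(('n \<Rightarrow>\<^sub>0 nat) \<Rightarrow>\<^sub>0 'a::comm_ring_1) set"
  assumes X: "is_ideal X" and m: "m \<in> LT enc X"
    and pw: "\<forall>x. Poly_Mapping.lookup m x \<le> Poly_Mapping.lookup m' x"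
  shows "m' \<in> LT enc X"
proof -
  obtain f where f: "f \<in> X" "f \<noteq> 0" and mf: "m = lm enc f" using m unfolding LT_def by blast
  have lmf: "is_lm enc f m" using lm_is_lm[OF f(2)] mf by simp
  define d where "d = m' - m"
  have dm: "d + m = m'" unfolding d_def
    by (rule poly_mapping_eqI) (use pw in \<open>simp add: lookup_add lookup_minus\<close>)
  define g where "g = Poly_Mapping.single d (1::'a) * f"
  have gX: "g \<in> X" unfolding g_def by (rule id_multL[OF X f(1)])
  have "Poly_Mapping.lookup g (d + m) = Poly_Mapping.lookup f m" unfolding g_def by (simp add: smult_lookup)
  then have inG: "d + m \<in> Poly_Mapping.keys g" using lmf unfolding is_lm_def by (simp add: in_keys_iff)
  have "\<forall>k\<in>Poly_Mapping.keys g. lexle enc k (d + m)"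
  proof
    fix k assume "k \<in> Poly_Mapping.keys g"
    then obtain p where "k = d + p" "p \<in> Poly_Mapping.keys f" using smult_keys unfolding g_def by blast
    then show "lexle enc k (d + m)" using lmf lexle_add unfolding is_lm_def by blast
  qed
  then have "is_lm enc g (d + m)" using inG unfolding is_lm_def by blast
  then have "lm enc g = m'" using lm_eqI dm by simp
  moreover have "g \<noteq> 0" using inG by auto
  ultimately show ?thesis using gX unfolding LT_def by blast
qed

lemma LT_mono: "X \<subseteq> Y \<Longrightarrow> LT enc X \<subseteq> LT enc Y"
  unfolding LT_def by blast

lemma LT_eq:
  fixes X Y :: "(('n \<Rightarrow>\<^sub>0 nat) \<Rightarrow>\<^sub>0 'a::field) set"
  assumes X: "is_ideal X" and Y: "is_ideal Y" and XY: "X \<subseteq> Y" and LTs: "LT enc Y \<subseteq> LT enc X"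
  shows "Y \<subseteq> X"
proof (rule ccontr)
  assume "\<not> Y \<subseteq> X"
  define Bad where "Bad = {f. f \<in> Y \<and> f \<notin> X}"
  have "Bad \<noteq> {}" using \<open>\<not> Y \<subseteq> X\<close> unfolding Bad_def by blast
  then obtain f0 where "f0 \<in> Bad" by blast
  obtain m0 where m0: "m0 \<in> lm enc ` Bad" and m0min: "\<And>m. (m, m0) \<in> {(a, b). lexless enc a b} \<Longrightarrow> m \<notin> lm enc ` Bad"
    using wfE_min[OF lexless_wf[OF enc], of "lm enc f0" "lm enc ` Bad"] \<open>f0 \<in> Bad\<close> by blast
  then obtain f where fB: "f \<in> Bad" and fm: "lm enc f = m0" by blast
  have fY: "f \<in> Y" and fX: "f \<notin> X" using fB unfolding Bad_def by auto
  have f0: "f \<noteq> 0" using fX id_zero[OF X] by auto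
  have lmf: "is_lm enc f m0" using lm_is_lm[OF f0] fm by simp
  have "m0 \<in> LT enc Y" using fY f0 fm unfolding LT_def by blast
  then have "m0 \<in> LT enc X" using LTs by blast
  then obtain g where gX: "g \<in> X" and g0: "g \<noteq> 0" and gm: "lm enc g = m0" unfolding LT_def by blast
  have lmg: "is_lm enc g m0" using lm_is_lm[OF g0] gm by simp
  define cf where "cf = Poly_Mapping.lookup f m0"
  define cg where "cg = Poly_Mapping.lookup g m0"
  have cg0: "cg \<noteq> 0" using lmg unfolding is_lm_def cg_def by (simp add: in_keys_iff)
  define h where "h = f - Poly_Mapping.single 0 (cf / cg) * g"
  have sgX: "Poly_Mapping.single 0 (cf / cg) * g \<in> X" by (rule id_multL[OF X gX])
  have hY: "h \<in> Y" unfolding h_def using fY sgX XY by (intro id_diff[OF Y]) auto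
  have hX: "h \<notin> X"
  proof
    assume "h \<in> X"
    then have "h + Poly_Mapping.single 0 (cf / cg) * g \<in> X" using sgX by (rule id_add[OF X])
    then show False using fX unfolding h_def by simp
  qed
  have hB: "h \<in> Bad" using hY hX unfolding Bad_def by blast
  have h0: "h \<noteq> 0" using hX id_zero[OF X] by auto
  have hm0: "Poly_Mapping.lookup h m0 = 0"
    using smult_lookup[of 0 "cf / cg" g m0] cg0 unfolding h_def cf_def cg_def by (simp add: lookup_minus)
  have keysh: "Poly_Mapping.keys h \<subseteq> Poly_Mapping.keys f \<union> Poly_Mapping.keys g"
  proof -
    have "Poly_Mapping.keys h \<subseteq> Poly_Mapping.keys f \<union> Poly_Mapping.keys (Poly_Mapping.single 0 (cf / cg) * g)"
      unfolding h_def by (rule keys_diff)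
    moreover have "Poly_Mapping.keys (Poly_Mapping.single 0 (cf / cg) * g) \<subseteq> Poly_Mapping.keys g"
      using smult_keys[of 0 "cf / cg" g] by simp
    ultimately show ?thesis by blast
  qed
  have lmh: "is_lm enc h (lm enc h)" by (rule lm_is_lm[OF h0])
  then have "lm enc h \<in> Poly_Mapping.keys h" unfolding is_lm_def by blast
  then have le: "lexle enc (lm enc h) m0" and ne: "lm enc h \<noteq> m0"
    using keysh lmf lmg hm0 unfolding is_lm_def by (auto simp: in_keys_iff)
  then have "lexless enc (lm enc h) m0" unfolding lexle_def by blast
  then have "lm enc h \<notin> lm enc ` Bad" using m0min by blast
  then show False using hB by blast
qed

lemma noeth_chain:
  fixes C :: "nat \<Rightarrow> (('n \<Rightarrow>\<^sub>0 nat) \<Rightarrow>\<^sub>0 'a::field) set"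
  assumes ids: "\<And>i. is_ideal (C i)" and strict: "\<And>i. C i \<subset> C (Suc i)"
  shows False
proof -
  have "\<forall>i. \<exists>m. m \<in> LT enc (C (Suc i)) \<and> m \<notin> LT enc (C i)"
  proof
    fix i
    show "\<exists>m. m \<in> LT enc (C (Suc i)) \<and> m \<notin> LT enc (C i)"
    proof (rule ccontr)
      assume "\<not> ?thesis"
      then have "LT enc (C (Suc i)) \<subseteq> LT enc (C i)" by blast
      then have "C (Suc i) \<subseteq> C i" using LT_eq[OF ids ids] strict by blast
      then show False using strict[of i] by blast
    qed
  qed
  then obtain ms where ms: "\<And>i. ms i \<in> LT enc (C (Suc i)) \<and> ms i \<notin> LT enc (C i)" by metis
  obtain i j where ij: "i < j" and pw: "\<forall>x. Poly_Mapping.lookup (ms i) x \<le> Poly_Mapping.lookup (ms j) x"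
    using dickson[of ms] by blast
  have mono: "C n \<subseteq> C n'" if "n \<le> n'" for n n'
    using lift_Suc_mono_le[of C, OF _ that] strict by blast
  have "ms i \<in> LT enc (C j)" using ms[of i] LT_mono[OF mono[of "Suc i" j]] ij by auto
  then have "ms j \<in> LT enc (C j)" by (rule LT_up[OF ids _ pw])
  then show False using ms[of j] by blast
qed

end

theorem noeth_mpoly: "noeth TYPE(('n::finite \<Rightarrow>\<^sub>0 nat) \<Rightarrow>\<^sub>0 'a::field)"
proof -
  obtain enc :: "'n \<Rightarrow> nat" where enc: "inj enc"
    using finite_imp_inj_to_nat_seg[of "UNIV :: 'n set"] by auto
  have "\<not> (\<exists>C. \<forall>i. (C (Suc i), C i) \<in> {(X, Y::(('n \<Rightarrow>\<^sub>0 nat) \<Rightarrow>\<^sub>0 'a) set). is_ideal X \<and> is_ideal Y \<and> Y \<subset> X})"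
  proof
    assume "\<exists>C. \<forall>i. (C (Suc i), C i) \<in> {(X, Y::(('n \<Rightarrow>\<^sub>0 nat) \<Rightarrow>\<^sub>0 'a) set). is_ideal X \<and> is_ideal Y \<and> Y \<subset> X}"
    then obtain C :: "nat \<Rightarrow> (('n \<Rightarrow>\<^sub>0 nat) \<Rightarrow>\<^sub>0 'a) set"
      where C0: "\<forall>i. (C (Suc i), C i) \<in> {(X, Y::(('n \<Rightarrow>\<^sub>0 nat) \<Rightarrow>\<^sub>0 'a) set). is_ideal X \<and> is_ideal Y \<and> Y \<subset> X}"
      by blast
    have C1: "\<And>i. is_ideal (C i)" and C2: "\<And>i. C i \<subset> C (Suc i)" using C0 by auto
    show False by (rule noeth_chain[OF enc, of C, OF C1 C2])
  qed
  then show ?thesis unfolding noeth_def wfp_def using wf_iff_no_infinite_down_chain by blast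
qed


theorem theorem2p5:
  fixes a :: "'n::finite \<Rightarrow> nat"
    and I J :: "('n, 'a::field_char_0) mpoly set"
    and k :: nat
  assumes "\<forall>i. a i > 0"
    and "homogeneous_ideal a I"
    and "k \<ge> 2"
    and "ideal_pow (symbolic_power I (k - 1)) 2 \<subseteq> ideal_pow I k"
    and "homogeneous_ideal a J"
    and "ideal_pow I k \<subseteq> J"
    and "J \<subseteq> symbolic_power I k"
  shows "strongly_golod J"
proof -
  have I: "is_ideal I" using assms(2) unfolding homogeneous_ideal_def by simp
  have N: "noeth TYPE(('n \<Rightarrow>\<^sub>0 nat) \<Rightarrow>\<^sub>0 'a)" by (rule noeth_mpoly)
  have "{pderiv_var i f | i f. f \<in> J} \<subseteq> symbolic_power I (k - 1)"
  proof
    fix g assume "g \<in> {pderiv_var i f | i f. f \<in> J}"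
    then obtain i f where g: "g = pderiv_var i f" and f: "f \<in> J" by blast
    have "f \<in> symbolic_power I k" using f assms(7) by blast
    then show "g \<in> symbolic_power I (k - 1)"
      unfolding g by (rule deriv_symbolic[OF N I assms(3) is_deriv_pderiv])
  qed
  then have "deriv_ideal J \<subseteq> symbolic_power I (k - 1)"
    unfolding deriv_ideal_def by (rule ideal_gen_least[OF symbolic_power_ideal[OF I]])
  then have "ideal_pow (deriv_ideal J) 2 \<subseteq> ideal_pow (symbolic_power I (k - 1)) 2"
    by (rule ideal_pow_mono)
  then show ?thesis unfolding strongly_golod_def using assms(4) assms(6) by blast
qed


end
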